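(* Let $P$ be a finite Eulerian poset, i.e. a graded poset with unique minimum $\hat{0}$ and unique maximum $\hat{1}$ whose Möbius function satisfies $\mu(x,y)=(-1)^{\operatorname{rk}(y)-\operatorname{rk}(x)}$ for all $x\le y$, endowed with its rank function $\operatorname{rk}$, and let $n=\operatorname{rk}(\hat{1})$. Write $\mathsf{Z}=\mathsf{Z}_{P,\operatorname{rk}}$ and let $\mathsf{Z}|_{q=1/q}$ denote the polynomial obtained from $\mathsf{Z}$ by replacing $q$ by $1/q$ in its coefficients. Then $$\mathsf{Z}(x)=(-q)^{-n}\,\mathsf{Z}|_{q=1/q}(-qx).$$
   Context: $q$ is an indeterminate; for $n\in\mathbb{Z}$, $[n]_q=(q^n-1)/(q-1)$. For a finite poset $P$, a height function is a map $h:P\to\mathbb{N}$ with $h(x)<h(y)$ whenever $y$ covers $x$. For a graded poset, $\operatorname{rk}$ denotes the height function increasing by exactly $1$ along every cover relation with minimum value $0$ on each connected component. For $k\ge1$, $\operatorname{Ch}_k(P)$ is the set of strict chains $c_1<\cdots<c_k$ in $P$. For a tuple $a=(a_1,\dots,a_k)$ of distinct nonnegative integers, $\mathsf{E}_a\in\mathbb{Q}(q)[x]$ is the unique polynomial with $\mathsf{E}_a([n]_q)=\sum_{m\in\mathbb{N}^k,\ \sum m_i=n}q^{\sum a_im_i}$ for all $n\ge0$. The $q$-Zeta polynomial of $(P,h)$ is $\mathsf{Z}_{P,h}(x)=\sum_{k\ge1}\sum_{c\in\operatorname{Ch}_k(P)}q^{\sum_i h(c_i)}\,\mathsf{E}_{(h(c_1),\dots,h(c_k))}\big((x-[k+1]_q)/q^{k+1}\big)\in\mathbb{Q}(q)[x]$;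 it is the unique polynomial with $\mathsf{Z}_{P,h}([m]_q)=\sum_{e_1\le\cdots\le e_{m-1}\text{ in }P}q^{h(e_1)+\cdots+h(e_{m-1})}$ for all integers $m\ge2$. *)

theory Defs
  imports "HOL-Computational_Algebra.Polynomial" "HOL-Computational_Algebra.Fraction_Field"
begin

type_synonym qfield = "rat poly fract"

definition qq :: qfield where
  "qq = Fract [:0, 1:] 1"

definition qint :: "nat \<Rightarrow> qfield" where
  "qint n = (qq ^ n - 1) / (qq - 1)"

text \<open>Substitution q := 1/q, an automorphism of Q(q): a fraction a(q)/b(q) is sent to
  a(1/q)/b(1/q) (independent of the chosen representative).\<close>
definition eval_at_qinv :: "rat poly \<Rightarrow> qfield" where
  "eval_at_qinv a = poly (map_poly (\<lambda>c. Fract [:c:] 1) a) (inverse qq)"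

definition qinv_subst :: "qfield \<Rightarrow> qfield" where
  "qinv_subst x = (SOME y. \<exists>a b. b \<noteq> 0 \<and> x = Fract a b \<and>
                              y = eval_at_qinv a / eval_at_qinv b)"

definition Epoly :: "nat list \<Rightarrow> qfield poly" where
  "Epoly a = (THE p. \<forall>n. poly p (qint n) =
      (\<Sum>m\<in>{m :: nat list. length m = length a \<and> sum_list m = n}.
          qq ^ (\<Sum>i<length a. a ! i * m ! i)))"

definition partial_order_on' :: "'a set \<Rightarrow> ('a \<Rightarrow> 'a \<Rightarrow> bool) \<Rightarrow> bool" where
  "partial_order_on' P le \<longleftrightarrow>
     (\<forall>x\<in>P. le x x) \<and>
     (\<forall>x\<in>P. \<forall>y\<in>P. le x y \<and> le y x \<longrightarrow> x = y) \<and>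
     (\<forall>x\<in>P. \<forall>y\<in>P. \<forall>z\<in>P. le x y \<and> le y z \<longrightarrow> le x z)"

definition covers :: "'a set \<Rightarrow> ('a \<Rightarrow> 'a \<Rightarrow> bool) \<Rightarrow> 'a \<Rightarrow> 'a \<Rightarrow> bool" where
  "covers P le x y \<longleftrightarrow> x \<in> P \<and> y \<in> P \<and> le x y \<and> x \<noteq> y \<and>
     \<not> (\<exists>z\<in>P. le x z \<and> le z y \<and> z \<noteq> x \<and> z \<noteq> y)"

definition pchains :: "'a set \<Rightarrow> ('a \<Rightarrow> 'a \<Rightarrow> bool) \<Rightarrow> nat \<Rightarrow> 'a list set" where
  "pchains P le k = {c. length c = k \<and> set c \<subseteq> P \<and>
      (\<forall>i j. i < j \<and> j < k \<longrightarrow> le (c ! i) (c ! j) \<and> c ! i \<noteq> c ! j)}"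

definition qZeta :: "'a set \<Rightarrow> ('a \<Rightarrow> 'a \<Rightarrow> bool) \<Rightarrow> ('a \<Rightarrow> nat) \<Rightarrow> qfield poly" where
  "qZeta P le h = (\<Sum>k\<in>{1..card P}. \<Sum>c\<in>pchains P le k.
      smult (qq ^ (\<Sum>i<k. h (c ! i)))
        (pcompose (Epoly (map h c))
           [: - qint (k + 1) / qq ^ (k + 1), 1 / qq ^ (k + 1) :]))"

definition mobius :: "'a set \<Rightarrow> ('a \<Rightarrow> 'a \<Rightarrow> bool) \<Rightarrow> 'a \<Rightarrow> 'a \<Rightarrow> int" where
  "mobius P le = (THE f.
      (\<forall>x\<in>P. \<forall>y\<in>P. le x y \<longrightarrow>
          (\<Sum>z\<in>{z\<in>P. le x z \<and> le z y}. f x z) = (if x = y then 1 else 0)) \<and>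
      (\<forall>x y. \<not> (x \<in> P \<and> y \<in> P \<and> le x y) \<longrightarrow> f x y = 0))"

definition eulerian :: "'a set \<Rightarrow> ('a \<Rightarrow> 'a \<Rightarrow> bool) \<Rightarrow> 'a \<Rightarrow> 'a \<Rightarrow> ('a \<Rightarrow> nat) \<Rightarrow> bool" where
  "eulerian P le zhat ohat rk \<longleftrightarrow>
     finite P \<and> partial_order_on' P le \<and>
     zhat \<in> P \<and> ohat \<in> P \<and> (\<forall>x\<in>P. le zhat x \<and> le x ohat) \<and>
     rk zhat = 0 \<and> (\<forall>x y. covers P le x y \<longrightarrow> rk y = rk x + 1) \<and>
     (\<forall>x\<in>P. \<forall>y\<in>P. le x y \<longrightarrow> mobius P le x y = (-1) ^ (rk y - rk x))"

end

theory Submission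
  imports Defs
begin



definition emb :: "rat \<Rightarrow> qfield" where "emb c = Fract [:c:] 1"

lemma emb_0[simp]: "emb 0 = 0" by (simp add: emb_def fract_collapse)
lemma emb_1[simp]: "emb 1 = 1" by (simp add: emb_def fract_collapse one_pCons[symmetric])
lemma emb_add: "emb (a + b) = emb a + emb b" by (simp add: emb_def)
lemma emb_mult: "emb (a * b) = emb a * emb b" by (simp add: emb_def mult.commute)
lemma emb_eq0: "emb a = 0 \<longleftrightarrow> a = 0"
  by (simp add: emb_def Zero_fract_def eq_fract)

lemma poly_emb_qq: "poly (map_poly emb r) qq = Fract r 1"
proof (induction r)
  case (pCons a p)
  have "Fract (pCons a p) 1 = Fract [:a:] 1 + Fract [:0,1:] 1 * Fract p 1"
    by simp
  have m: "map_poly emb (pCons a p) = pCons (emb a) (map_poly emb p)"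
    by (rule map_poly_pCons) simp
  have "poly (map_poly emb (pCons a p)) qq = emb a + qq * Fract p 1"
    using pCons.IH unfolding m by simp
  also have "\<dots> = Fract (pCons a p) 1" by (simp add: emb_def qq_def)
  finally show ?case .
qed (simp add: fract_collapse)

lemma qq_nz[simp]: "qq \<noteq> 0" by (simp add: qq_def Zero_fract_def eq_fract)
lemma qq_ne1[simp]: "qq \<noteq> 1" by (simp add: qq_def One_fract_def eq_fract one_pCons)

lemma qq_pow: "qq ^ n = Fract ([:0,1:] ^ n) 1"
  by (induction n) (simp_all add: qq_def fract_collapse)

lemma qq_pow_inj: "qq ^ a = qq ^ b \<longleftrightarrow> a = b"
proof
  assume "qq ^ a = qq ^ b"
  then have "([:0,1:] ^ a :: rat poly) = [:0,1:] ^ b" by (simp add: qq_pow eq_fract)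
  then have "degree ([:0,1:] ^ a :: rat poly) = degree ([:0,1:] ^ b :: rat poly)" by simp
  then show "a = b" by (simp add: degree_power_eq)
qed simp

lemma ev_def2: "eval_at_qinv a = poly (map_poly emb a) (inverse qq)"
proof -
  have "emb = (\<lambda>c. Fract [:c:] 1)" by (rule ext) (simp add: emb_def)
  then show ?thesis by (simp add: eval_at_qinv_def)
qed

lemma ev_pCons: "eval_at_qinv (pCons c p) = emb c + inverse qq * eval_at_qinv p"
  by (simp add: ev_def2 map_poly_pCons)

lemma ev_0[simp]: "eval_at_qinv 0 = 0" by (simp add: ev_def2)

lemma ev_add: "eval_at_qinv (a + b) = eval_at_qinv a + eval_at_qinv b"
proof (induction a arbitrary: b)
  case (pCons c p)
  show ?case
  proof (cases b)
    case (pCons d r)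
    then show ?thesis using pCons.IH[of r] pCons
      by (simp add: ev_pCons emb_add algebra_simps)
  qed
qed simp

lemma ev_smult: "eval_at_qinv (smult c b) = emb c * eval_at_qinv b"
  by (induction b) (simp_all add: ev_pCons emb_mult algebra_simps)

lemma ev_mult: "eval_at_qinv (a * b) = eval_at_qinv a * eval_at_qinv b"
proof (induction a)
  case (pCons c p)
  have "pCons c p * b = smult c b + pCons 0 (p * b)" by simp
  then show ?case using pCons
    by (simp add: ev_add ev_smult ev_pCons algebra_simps)
qed simp

lemma ev_1[simp]: "eval_at_qinv 1 = 1"
  by (simp add: ev_def2 one_pCons map_poly_pCons)

lemma ev_X: "eval_at_qinv [:0,1:] = inverse qq"
  by (simp add: ev_def2 map_poly_pCons)

lemma reflect_map_emb: "reflect_poly (map_poly emb b) = map_poly emb (reflect_poly b)"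
proof -
  have d: "degree (map_poly emb b) = degree b"
    by (rule degree_map_poly) (simp add: emb_eq0)
  show ?thesis
    by (intro poly_eqI) (simp add: coeff_reflect_poly coeff_map_poly d)
qed

lemma ev_nz: assumes "b \<noteq> 0" shows "eval_at_qinv b \<noteq> 0"
proof
  assume "eval_at_qinv b = 0"
  then have "poly (reflect_poly (map_poly emb b)) qq = 0"
    by (simp add: poly_reflect_poly_nz ev_def2)
  then have "Fract (reflect_poly b) 1 = 0" by (simp add: reflect_map_emb poly_emb_qq)
  then have "reflect_poly b = 0" by (simp add: Zero_fract_def eq_fract)
  with assms show False by simp
qed

lemma sg_Fract: assumes "b \<noteq> 0"
  shows "qinv_subst (Fract a b) = eval_at_qinv a / eval_at_qinv b"
proof -
  let ?P = "\<lambda>y. \<exists>a' b'. b' \<noteq> 0 \<and> Fract a b = Fract a' b' \<and> y = eval_at_qinv a' / eval_at_qinv b'"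
  have ex: "?P (eval_at_qinv a / eval_at_qinv b)" using assms by blast
  have "?P (qinv_subst (Fract a b))" unfolding qinv_subst_def by (rule someI_ex) (use ex in blast)
  then obtain a' b' where b': "b' \<noteq> 0" "Fract a b = Fract a' b'"
    and y: "qinv_subst (Fract a b) = eval_at_qinv a' / eval_at_qinv b'" by blast
  have "a * b' = a' * b" using b' assms by (simp add: eq_fract)
  then have "eval_at_qinv a * eval_at_qinv b' = eval_at_qinv a' * eval_at_qinv b"
    by (metis ev_mult)
  then show ?thesis unfolding y using ev_nz[OF assms] ev_nz[OF b'(1)]
    by (simp add: frac_eq_eq)
qed

lemma sg_add: "qinv_subst (x + y) = qinv_subst x + qinv_subst y"
proof (cases x; cases y)
  fix a b c d :: "rat poly" assume "x = Fract a b" "b \<noteq> 0" "y = Fract c d" "d \<noteq> 0"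
  then show ?thesis using ev_nz[of b] ev_nz[of d]
    by (simp add: sg_Fract ev_add ev_mult field_simps)
qed

lemma sg_mult: "qinv_subst (x * y) = qinv_subst x * qinv_subst y"
proof (cases x; cases y)
  fix a b c d :: "rat poly" assume "x = Fract a b" "b \<noteq> 0" "y = Fract c d" "d \<noteq> 0"
  then show ?thesis using ev_nz[of b] ev_nz[of d]
    by (simp add: sg_Fract ev_add ev_mult field_simps)
qed

lemma sg_1[simp]: "qinv_subst 1 = 1"
  by (simp add: One_fract_def sg_Fract)

lemma sg_0[simp]: "qinv_subst 0 = 0"
  by (simp add: Zero_fract_def sg_Fract)

lemma sg_minus: "qinv_subst (- x) = - qinv_subst x"
  using sg_add[of x "-x"] by (simp add: eq_neg_iff_add_eq_0)

lemma sg_diff: "qinv_subst (x - y) = qinv_subst x - qinv_subst y"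
  using sg_add[of x "-y"] sg_minus[of y] by simp

lemma sg_inverse: "qinv_subst (inverse x) = inverse (qinv_subst x)"
proof (cases "x = 0")
  case False
  then have "qinv_subst x * qinv_subst (inverse x) = 1"
    by (metis sg_mult sg_1 right_inverse)
  then show ?thesis by (metis inverse_unique)
qed simp

lemma sg_divide: "qinv_subst (x / y) = qinv_subst x / qinv_subst y"
  by (simp add: divide_inverse sg_mult sg_inverse)

lemma sg_power: "qinv_subst (x ^ n) = qinv_subst x ^ n"
  by (induction n) (simp_all add: sg_mult)

lemma sg_sum: "qinv_subst (sum f A) = (\<Sum>a\<in>A. qinv_subst (f a))"
  by (induction A rule: infinite_finite_induct) (simp_all add: sg_add)

lemma sg_qq: "qinv_subst qq = inverse qq"
  by (simp add: qq_def sg_Fract ev_X)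

lemma sg_inv_qq: "qinv_subst (inverse qq) = qq"
  by (simp add: sg_inverse sg_qq)

lemma sg_m1: "qinv_subst (-1) = -1"
  by (simp add: sg_minus)

lemma poly_map_sg: "poly (map_poly qinv_subst p) (qinv_subst x) = qinv_subst (poly p x)"
proof (induction p)
  case (pCons a p)
  have m: "map_poly qinv_subst (pCons a p) = pCons (qinv_subst a) (map_poly qinv_subst p)"
    by (rule map_poly_pCons) simp
  show ?case unfolding m using pCons.IH by (simp add: sg_add sg_mult)
qed simp




lemma qint_U: "1 + (qq - 1) * qint m = qq ^ m"
  by (simp add: qint_def)

lemma qint_inj: "qint a = qint b \<Longrightarrow> a = b"
  using qint_U[of a] qint_U[of b] qq_pow_inj by metis

lemma qint_shift: "k \<le> m \<Longrightarrow> (qint m - qint k) / qq ^ k = qint (m - k)"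
proof -
  assume "k \<le> m"
  then have "qq ^ m = qq ^ k * qq ^ (m - k)" by (simp add: power_add[symmetric])
  then have "qint m - qint k = qq ^ k * qint (m - k)"
    unfolding qint_def by (simp add: diff_divide_distrib[symmetric] algebra_simps)
  then show ?thesis by simp
qed

lemma poly_eq_qint:
  fixes p r :: "qfield poly"
  assumes "\<And>m. m \<ge> M \<Longrightarrow> poly p (qint m) = poly r (qint m)"
  shows "p = r"
proof (rule ccontr)
  assume "p \<noteq> r"
  then have "p - r \<noteq> 0" by simp
  then have fin: "finite {x. poly (p - r) x = 0}" by (rule poly_roots_finite)
  have "qint ` {M..} \<subseteq> {x. poly (p - r) x = 0}" using assms by auto
  moreover have "infinite (qint ` {M..})"
    using finite_imageD[of qint "{M..}"] qint_inj by (metis infinite_Ici inj_onI)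
  ultimately show False using fin finite_subset by blast
qed

definition comp :: "nat \<Rightarrow> nat \<Rightarrow> nat list set" where
  "comp k n = {m. length m = k \<and> sum_list m = n}"

definition hs :: "nat list \<Rightarrow> nat \<Rightarrow> qfield" where
  "hs a n = (\<Sum>m\<in>{m :: nat list. length m = length a \<and> sum_list m = n}.
          qq ^ (\<Sum>i<length a. a ! i * m ! i))"

lemma finite_comp: "finite {m :: nat list. length m = k \<and> sum_list m = n}"
proof -
  have "{m :: nat list. length m = k \<and> sum_list m = n} \<subseteq> {m. set m \<subseteq> {..n} \<and> length m = k}"
    using member_le_sum_list by fastforce
  moreover have "finite {m. set m \<subseteq> {..n} \<and> length m = k}"
    by (rule finite_lists_length_eq) simp
  ultimately show ?thesis by (rule finite_subset)
qed

lemma hs_0: "hs a 0 = 1"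
proof -
  have "{m :: nat list. length m = length a \<and> sum_list m = 0} = {replicate (length a) 0}"
    by (auto simp: sum_list_eq_0_iff intro: replicate_eqI)
  then show ?thesis by (simp add: hs_def)
qed

lemma hs_Nil_Suc: "hs [] (Suc n) = 0"
  by (simp add: hs_def)

lemma wexp_Cons': "(\<Sum>i<Suc (length a). (r # a) ! i * (j # m) ! i) = r * j + (\<Sum>i<length a. a ! i * m ! i)"
  by (simp only: sum.lessThan_Suc_shift) simp

lemma wexp_Cons: "(\<Sum>i<length (r # a). (r # a) ! i * (j # m) ! i) = r * j + (\<Sum>i<length a. a ! i * m ! i)"
  by (simp only: length_Cons wexp_Cons')

lemma hs_rec: "hs (r # a) (Suc n) = hs a (Suc n) + qq ^ r * hs (r # a) n"
proof -
  let ?C = "\<lambda>k n. {m :: nat list. length m = k \<and> sum_list m = n}"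
  let ?w = "\<lambda>m. qq ^ (\<Sum>i<length (r # a). (r # a) ! i * m ! i)"
  let ?f = "\<lambda>m. Suc (hd m) # tl m"
  have split: "?C (Suc (length a)) (Suc n) = Cons 0 ` ?C (length a) (Suc n) \<union> ?f ` ?C (Suc (length a)) n"
  proof (rule set_eqI, rule iffI)
    fix m assume "m \<in> ?C (Suc (length a)) (Suc n)"
    then obtain j m' where m: "m = j # m'" "length m' = length a" "j + sum_list m' = Suc n"
      by (cases m) auto
    show "m \<in> Cons 0 ` ?C (length a) (Suc n) \<union> ?f ` ?C (Suc (length a)) n"
    proof (cases j)
      case 0 then show ?thesis using m by auto
    next
      case (Suc j')
      then have "m = ?f (j' # m')" using m by simp
      moreover have "j' # m' \<in> ?C (Suc (length a)) n" using m Suc by simp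
      ultimately show ?thesis by blast
    qed
  next
    fix m assume "m \<in> Cons 0 ` ?C (length a) (Suc n) \<union> ?f ` ?C (Suc (length a)) n"
    then show "m \<in> ?C (Suc (length a)) (Suc n)"
    proof
      assume "m \<in> ?f ` ?C (Suc (length a)) n"
      then obtain m0 where "m = ?f m0" "m0 \<in> ?C (Suc (length a)) n" by blast
      then show ?thesis by (cases m0) auto
    qed auto
  qed
  have disj: "Cons 0 ` ?C (length a) (Suc n) \<inter> ?f ` ?C (Suc (length a)) n = {}" by auto
  have inj: "inj_on ?f (?C (Suc (length a)) n)"
  proof (rule inj_onI)
    fix x y assume "x \<in> ?C (Suc (length a)) n" "y \<in> ?C (Suc (length a)) n" "?f x = ?f y"
    then show "x = y" by (cases x; cases y) auto
  qed
  have "hs (r # a) (Suc n) = sum ?w (Cons 0 ` ?C (length a) (Suc n)) + sum ?w (?f ` ?C (Suc (length a)) n)"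
    unfolding hs_def using split disj
    by (simp add: sum.union_disjoint finite_comp del: length_Cons) 
  also have "sum ?w (Cons 0 ` ?C (length a) (Suc n)) = hs a (Suc n)"
    by (simp add: sum.reindex hs_def wexp_Cons' del: sum.lessThan_Suc)
  also have "sum ?w (?f ` ?C (Suc (length a)) n) = (\<Sum>m\<in>?C (Suc (length a)) n. ?w (?f m))"
    by (rule sum.reindex_cong[OF inj]) auto
  also have "\<dots> = (\<Sum>m\<in>?C (Suc (length a)) n. qq ^ r * ?w m)"
  proof (rule sum.cong[OF refl])
    fix m assume "m \<in> ?C (Suc (length a)) n"
    then obtain j m' where m: "m = j # m'" by (cases m) auto
    show "?w (?f m) = qq ^ r * ?w m"
      unfolding m by (simp only: wexp_Cons list.sel) (simp add: power_add)
  qed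
  also have "\<dots> = qq ^ r * hs (r # a) n"
    by (simp add: hs_def sum_distrib_left)
  finally show ?thesis .
qed

lemma hs_exp: "distinct a \<Longrightarrow> a \<noteq> [] \<Longrightarrow> \<exists>\<alpha>. \<forall>n. hs a n = (\<Sum>d\<in>set a. \<alpha> d * (qq ^ d) ^ n)"
proof (induction a)
  case Nil then show ?case by simp
next
  case (Cons c a)
  obtain \<beta> where \<beta>: "\<And>n. hs a (Suc n) = (\<Sum>d\<in>set a. \<beta> d * (qq ^ d) ^ Suc n)"
  proof (cases "a = []")
    case True then show ?thesis using that[of "\<lambda>_. 0"] by (simp add: hs_Nil_Suc)
  next
    case False then show ?thesis using Cons that by auto
  qed
  have cna: "c \<notin> set a" using Cons.prems by simp
  define \<alpha> where "\<alpha> d = (if d = c then 1 - (\<Sum>e\<in>set a. \<beta> e * qq ^ e / (qq ^ e - qq ^ c))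
                       else \<beta> d * qq ^ d / (qq ^ d - qq ^ c))" for d
  have trm: "\<alpha> d * (qq ^ d) ^ Suc n = \<beta> d * (qq ^ d) ^ Suc n + qq ^ c * (\<alpha> d * (qq ^ d) ^ n)"
    if "d \<in> set a" for d n
  proof -
    have dc: "d \<noteq> c" using that cna by auto
    then have ne: "qq ^ d - qq ^ c \<noteq> 0" using qq_pow_inj by simp
    have "\<alpha> d = \<beta> d * qq ^ d / (qq ^ d - qq ^ c)" using dc by (simp add: \<alpha>_def)
    then have "\<alpha> d * qq ^ d = \<beta> d * qq ^ d + qq ^ c * \<alpha> d" using ne by (simp add: field_simps)
    then have "\<alpha> d * qq ^ d * (qq ^ d) ^ n = (\<beta> d * qq ^ d + qq ^ c * \<alpha> d) * (qq ^ d) ^ n" by simp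
    then show ?thesis by (simp add: algebra_simps)
  qed
  have "hs (c # a) n = (\<Sum>d\<in>set (c # a). \<alpha> d * (qq ^ d) ^ n)" for n
  proof (induction n)
    case 0
    have "(\<Sum>d\<in>set a. \<alpha> d) = (\<Sum>e\<in>set a. \<beta> e * qq ^ e / (qq ^ e - qq ^ c))"
      by (rule sum.cong) (use cna in \<open>auto simp: \<alpha>_def\<close>)
    then show ?case using cna by (simp add: hs_0 \<alpha>_def)
  next
    case (Suc n)
    have "hs (c # a) (Suc n) = hs a (Suc n) + qq ^ c * hs (c # a) n" by (rule hs_rec)
    also have "\<dots> = (\<Sum>d\<in>set a. \<beta> d * (qq ^ d) ^ Suc n) +
        qq ^ c * (\<alpha> c * (qq ^ c) ^ n + (\<Sum>d\<in>set a. \<alpha> d * (qq ^ d) ^ n))"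
      using Suc cna by (simp add: \<beta>)
    also have "\<dots> = \<alpha> c * (qq ^ c) ^ Suc n + (\<Sum>d\<in>set a. \<beta> d * (qq ^ d) ^ Suc n + qq ^ c * (\<alpha> d * (qq ^ d) ^ n))"
      by (simp add: sum.distrib sum_distrib_left algebra_simps)
    also have "\<dots> = \<alpha> c * (qq ^ c) ^ Suc n + (\<Sum>d\<in>set a. \<alpha> d * (qq ^ d) ^ Suc n)"
      using trm by simp
    also have "\<dots> = (\<Sum>d\<in>set (c # a). \<alpha> d * (qq ^ d) ^ Suc n)"
      using cna by simp
    finally show ?case .
  qed
  then show ?case by blast
qed

lemma Epoly_prop:
  assumes "distinct a" "a \<noteq> []"
  shows "poly (Epoly a) (qint n) = hs a n"
proof -
  obtain \<alpha> where \<alpha>: "\<And>n. hs a n = (\<Sum>d\<in>set a. \<alpha> d * (qq ^ d) ^ n)"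
    using hs_exp[OF assms] by blast
  define p where "p = (\<Sum>d\<in>set a. smult (\<alpha> d) ([:1, qq - 1:] ^ d))"
  have p: "poly p (qint n) = hs a n" for n
  proof -
    have "poly p (qint n) = (\<Sum>d\<in>set a. \<alpha> d * (qq ^ n) ^ d)"
      using qint_U[of n] by (simp add: p_def poly_sum mult.commute)
    also have "\<dots> = hs a n" by (simp add: \<alpha> power_mult[symmetric] mult.commute)
    finally show ?thesis .
  qed
  have ex1: "\<exists>!p. \<forall>n. poly p (qint n) = hs a n"
  proof (rule ex1I[of _ p])
    fix r assume "\<forall>n. poly r (qint n) = hs a n"
    then show "r = p" using p by (intro poly_eq_qint[of 0]) auto
  qed (use p in auto)
  have "\<forall>n. poly (Epoly a) (qint n) = hs a n"
    unfolding Epoly_def hs_def[symmetric] by (rule theI'[OF ex1])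
  then show ?thesis by blast
qed




locale eul =
  fixes P :: "'a set" and le :: "'a \<Rightarrow> 'a \<Rightarrow> bool" and zhat ohat :: 'a and rk :: "'a \<Rightarrow> nat"
  assumes eul: "eulerian P le zhat ohat rk"
begin

lemma E1: "finite P"
  using eul unfolding eulerian_def by blast
lemma E2: "partial_order_on' P le"
  using eul unfolding eulerian_def by blast
lemma E3: "zhat \<in> P"
  using eul unfolding eulerian_def by blast
lemma E4: "ohat \<in> P"
  using eul unfolding eulerian_def by blast
lemma E5: "\<forall>x\<in>P. le zhat x \<and> le x ohat"
  using eul unfolding eulerian_def by blast
lemma E6: "rk zhat = 0"
  using eul unfolding eulerian_def by blast
lemma E7: "\<forall>x y. covers P le x y \<longrightarrow> rk y = rk x + 1"
  using eul unfolding eulerian_def by blast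
lemma E8: "\<forall>x\<in>P. \<forall>y\<in>P. le x y \<longrightarrow> mobius P le x y = (-1) ^ (rk y - rk x)"
  using eul unfolding eulerian_def by blast
lemma PO1: "\<forall>x\<in>P. le x x"
  using E2 unfolding partial_order_on'_def by blast
lemma PO2: "\<forall>x\<in>P. \<forall>y\<in>P. le x y \<and> le y x \<longrightarrow> x = y"
  using E2 unfolding partial_order_on'_def by blast
lemma PO3: "\<forall>x\<in>P. \<forall>y\<in>P. \<forall>z\<in>P. le x y \<and> le y z \<longrightarrow> le x z"
  using E2 unfolding partial_order_on'_def by blast

lemma fin: "finite P" by (rule E1)
lemma prefl: "x \<in> P \<Longrightarrow> le x x" using PO1 by blast
lemma pantisym: "x \<in> P \<Longrightarrow> y \<in> P \<Longrightarrow> le x y \<Longrightarrow> le y x \<Longrightarrow> x = y"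
  using PO2 by blast
lemma ptrans: "x \<in> P \<Longrightarrow> y \<in> P \<Longrightarrow> z \<in> P \<Longrightarrow> le x y \<Longrightarrow> le y z \<Longrightarrow> le x z"
  using PO3 by blast
lemma zhat: "zhat \<in> P" by (rule E3)
lemma ohat: "ohat \<in> P" by (rule E4)
lemma zle: "x \<in> P \<Longrightarrow> le zhat x" using E5 by blast
lemma leo: "x \<in> P \<Longrightarrow> le x ohat" using E5 by blast
lemma rk0: "rk zhat = 0" by (rule E6)
lemma rkcov: "covers P le x y \<Longrightarrow> rk y = rk x + 1" using E7 by blast
lemma mob: "x \<in> P \<Longrightarrow> y \<in> P \<Longrightarrow> le x y \<Longrightarrow> mobius P le x y = (-1) ^ (rk y - rk x)"
  using E8 by blast

lemma rk_less_aux: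
  "\<forall>x y. card {z\<in>P. le x z \<and> le z y} = N \<longrightarrow> x \<in> P \<longrightarrow> y \<in> P \<longrightarrow> le x y \<longrightarrow> x \<noteq> y \<longrightarrow> rk x < rk y"
proof (induction N rule: less_induct)
  case (less N)
  show ?case
  proof (intro allI impI)
    fix x y assume N: "card {z\<in>P. le x z \<and> le z y} = N" and xy: "x \<in> P" "y \<in> P" "le x y" "x \<noteq> y"
    show "rk x < rk y"
    proof (cases "covers P le x y")
      case True then show ?thesis using rkcov by simp
    next
      case False
      then obtain z where z: "z \<in> P" "le x z" "le z y" "z \<noteq> x" "z \<noteq> y"
        using xy unfolding covers_def by blast
      have finI: "finite {w\<in>P. le x w \<and> le w y}" using fin by simp
      have "{w\<in>P. le x w \<and> le w z} \<subset> {w\<in>P. le x w \<and> le w y}"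
      proof
        show "{w\<in>P. le x w \<and> le w z} \<subseteq> {w\<in>P. le x w \<and> le w y}"
          using z xy by (auto intro: ptrans[OF _ z(1) xy(2)])
        have "y \<notin> {w\<in>P. le x w \<and> le w z}" using pantisym[OF z(1) xy(2)] z by blast
        moreover have "y \<in> {w\<in>P. le x w \<and> le w y}" using xy prefl by blast
        ultimately show "{w\<in>P. le x w \<and> le w z} \<noteq> {w\<in>P. le x w \<and> le w y}" by blast
      qed
      then have c1: "card {w\<in>P. le x w \<and> le w z} < N" using N finI psubset_card_mono by blast
      have "{w\<in>P. le z w \<and> le w y} \<subset> {w\<in>P. le x w \<and> le w y}"
      proof
        show "{w\<in>P. le z w \<and> le w y} \<subseteq> {w\<in>P. le x w \<and> le w y}"
          using z xy by (auto intro: ptrans[OF xy(1) z(1)])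
        have "x \<notin> {w\<in>P. le z w \<and> le w y}" using pantisym[OF xy(1) z(1)] z by blast
        moreover have "x \<in> {w\<in>P. le x w \<and> le w y}" using xy prefl by blast
        ultimately show "{w\<in>P. le z w \<and> le w y} \<noteq> {w\<in>P. le x w \<and> le w y}" by blast
      qed
      then have c2: "card {w\<in>P. le z w \<and> le w y} < N" using N finI psubset_card_mono by blast
      have "rk x < rk z" using less[OF c1] xy z by blast
      moreover have "rk z < rk y" using less[OF c2] xy z by blast
      ultimately show ?thesis by simp
    qed
  qed
qed

lemma rk_less: "x \<in> P \<Longrightarrow> y \<in> P \<Longrightarrow> le x y \<Longrightarrow> x \<noteq> y \<Longrightarrow> rk x < rk y"
  using rk_less_aux by blast

lemma rk_le: "x \<in> P \<Longrightarrow> y \<in> P \<Longrightarrow> le x y \<Longrightarrow> rk x \<le> rk y"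
  using rk_less by fastforce

definition Qm :: "'a set \<Rightarrow> ('a \<Rightarrow> 'a \<Rightarrow> int) \<Rightarrow> bool" where
  "Qm S f \<longleftrightarrow> (\<forall>x\<in>S. \<forall>y\<in>S. le x y \<longrightarrow>
          (\<Sum>z\<in>{z\<in>S. le x z \<and> le z y}. f x z) = (if x = y then 1 else 0)) \<and>
      (\<forall>x y. \<not> (x \<in> S \<and> y \<in> S \<and> le x y) \<longrightarrow> f x y = 0)"

lemma Qm_exists_aux: "\<forall>S. card S = N \<longrightarrow> S \<subseteq> P \<longrightarrow> (\<exists>f. Qm S f)"
proof (induction N rule: less_induct)
  case (less N)
  show ?case
  proof (intro allI impI)
    fix S assume N: "card S = N" and SP: "S \<subseteq> P"
    have finS: "finite S" using SP fin finite_subset by blast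
    show "\<exists>f. Qm S f"
    proof (cases "S = {}")
      case True then show ?thesis by (intro exI[of _ "\<lambda>_ _. 0"]) (simp add: Qm_def)
    next
      case False
      have "Max (rk ` S) \<in> rk ` S" using finS False by (intro Max_in) auto
      then obtain m where m: "m \<in> S" "rk m = Max (rk ` S)" by (metis imageE)
      have mmax: "\<And>x. x \<in> S \<Longrightarrow> rk x \<le> rk m" using m finS by simp
      have maxm: "y = m" if "y \<in> S" "le m y" for y
      proof (rule ccontr)
        assume "y \<noteq> m"
        moreover have "m \<in> P" "y \<in> P" using SP that m by auto
        ultimately have "rk m < rk y" using rk_less that by metis
        then show False using mmax[OF that(1)] by simp
      qed
      define S' where "S' = S - {m}"
      have "card S > 0" using finS m card_gt_0_iff by blast
      then have "card S' < N" using N m finS by (simp add: S'_def)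
      moreover have "S' \<subseteq> P" using SP S'_def by auto
      ultimately obtain f' where f': "Qm S' f'" using less by blast
      define f where "f x y = (if y = m then (if x \<in> S \<and> le x m then (if x = m then 1
          else - (\<Sum>z\<in>{z\<in>S'. le x z \<and> le z m}. f' x z)) else 0) else f' x y)" for x y
      have "Qm S f"
        unfolding Qm_def
      proof (intro conjI ballI allI impI)
        fix x y assume xy: "x \<in> S" "y \<in> S" "le x y"
        show "(\<Sum>z\<in>{z\<in>S. le x z \<and> le z y}. f x z) = (if x = y then 1 else 0)"
        proof (cases "y = m")
          case False
          then have xm: "x \<noteq> m" using maxm[OF xy(2)] xy(3) by blast
          have I: "{z\<in>S. le x z \<and> le z y} = {z\<in>S'. le x z \<and> le z y}"
            using maxm[OF xy(2)] False by (auto simp: S'_def)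
          have "(\<Sum>z\<in>{z\<in>S. le x z \<and> le z y}. f x z) = (\<Sum>z\<in>{z\<in>S'. le x z \<and> le z y}. f' x z)"
            unfolding I by (rule sum.cong) (auto simp: f_def S'_def)
          also have "\<dots> = (if x = y then 1 else 0)"
          proof -
            have "x \<in> S'" "y \<in> S'" using xy xm False by (auto simp: S'_def)
            then show ?thesis using f' xy(3) unfolding Qm_def by blast
          qed
          finally show ?thesis .
        next
          case True
          show ?thesis
          proof (cases "x = m")
            case True
            have "m \<in> P" using SP m by auto
            then have "{z\<in>S. le x z \<and> le z y} = {m}"
              using \<open>y = m\<close> True SP m prefl by (auto intro: pantisym)
            then show ?thesis using True \<open>y = m\<close> m prefl[OF \<open>m \<in> P\<close>] by (simp add: f_def)
          next
            case False
            have I: "{z\<in>S. le x z \<and> le z y} = insert m {z\<in>S'. le x z \<and> le z m}"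
              using \<open>y = m\<close> xy m SP prefl by (auto simp: S'_def)
            have s1: "(\<Sum>z\<in>{z\<in>S'. le x z \<and> le z m}. f x z) = (\<Sum>z\<in>{z\<in>S'. le x z \<and> le z m}. f' x z)"
              by (rule sum.cong) (auto simp: f_def S'_def)
            have s2: "f x m = - (\<Sum>z\<in>{z\<in>S'. le x z \<and> le z m}. f' x z)"
              using xy \<open>y = m\<close> False by (simp add: f_def)
            have fin': "finite {z\<in>S'. le x z \<and> le z m}" using finS by (simp add: S'_def)
            have nm: "m \<notin> {z\<in>S'. le x z \<and> le z m}" by (simp add: S'_def)
            show ?thesis unfolding I sum.insert[OF fin' nm] s1 s2 using False \<open>y = m\<close> by simp
          qed
        qed
      next
        fix x y assume nxy: "\<not> (x \<in> S \<and> y \<in> S \<and> le x y)"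
        show "f x y = 0"
        proof (cases "y = m")
          case True
          then have "\<not> (x \<in> S \<and> le x m)" using nxy m by blast
          then show ?thesis unfolding f_def using True by auto
        next
          case False
          then have "\<not> (x \<in> S' \<and> y \<in> S' \<and> le x y)" using nxy by (auto simp: S'_def)
          then have "f' x y = 0" using f' unfolding Qm_def by blast
          then show ?thesis using False by (simp add: f_def)
        qed
      qed
      then show ?thesis by blast
    qed
  qed
qed

lemma Qm_unique:
  assumes f: "Qm P f" and g: "Qm P g"
  shows "f = g"
proof (intro ext)
  fix x y
  show "f x y = g x y"
  proof (cases "x \<in> P \<and> y \<in> P \<and> le x y")
    case False then show ?thesis using f g unfolding Qm_def by auto
  next
    case True
    have "\<forall>y. rk y = R \<longrightarrow> y \<in> P \<longrightarrow> le x y \<longrightarrow> f x y = g x y" for R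
    proof (induction R rule: less_induct)
      case (less R)
      show ?case
      proof (intro allI impI)
        fix y assume y: "rk y = R" "y \<in> P" "le x y"
        let ?I = "{z\<in>P. le x z \<and> le z y}"
        have fI: "finite ?I" using fin by simp
        have yI: "y \<in> ?I" using y prefl by simp
        have eqs: "(\<Sum>z\<in>?I - {y}. f x z) = (\<Sum>z\<in>?I - {y}. g x z)"
        proof (rule sum.cong[OF refl])
          fix z assume z: "z \<in> ?I - {y}"
          then have "rk z < R" using rk_less[of z y] y by auto
          then show "f x z = g x z" using less z by auto
        qed
        have "(\<Sum>z\<in>?I. f x z) = (\<Sum>z\<in>?I. g x z)"
          using f g True y unfolding Qm_def by auto
        then have "f x y + (\<Sum>z\<in>?I - {y}. f x z) = g x y + (\<Sum>z\<in>?I - {y}. g x z)"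
          using fI yI by (simp add: sum.remove)
        then show "f x y = g x y" using eqs by simp
      qed
    qed
    then show ?thesis using True by blast
  qed
qed

lemma mob_sum:
  assumes "x \<in> P" "y \<in> P" "le x y"
  shows "(\<Sum>z\<in>{z\<in>P. le x z \<and> le z y}. mobius P le x z) = (if x = y then 1 else 0)"
proof -
  have ex1: "\<exists>!f. Qm P f" using Qm_exists_aux Qm_unique by blast
  have "Qm P (mobius P le)" unfolding mobius_def Qm_def[symmetric] by (rule theI'[OF ex1])
  then show ?thesis using assms unfolding Qm_def by blast
qed

lemma eul_sum:
  assumes "x \<in> P" "w \<in> P" "le x w"
  shows "(\<Sum>z\<in>{z\<in>P. le x z \<and> le z w}. ((-1::qfield) ^ rk z)) = (if x = w then (-1) ^ rk x else 0)"
proof -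
  have "(\<Sum>z\<in>{z\<in>P. le x z \<and> le z w}. ((-1::qfield) ^ rk z)) =
        (\<Sum>z\<in>{z\<in>P. le x z \<and> le z w}. (-1) ^ rk x * of_int (mobius P le x z))"
  proof (rule sum.cong[OF refl])
    fix z assume z: "z \<in> {z\<in>P. le x z \<and> le z w}"
    then have "rk x \<le> rk z" using rk_le assms by auto
    then have "(-1::qfield) ^ rk z = (-1) ^ rk x * (-1) ^ (rk z - rk x)"
      by (simp add: power_add[symmetric])
    then show "(-1::qfield) ^ rk z = (-1) ^ rk x * of_int (mobius P le x z)"
      using mob[of x z] z assms by simp
  qed
  also have "\<dots> = (-1) ^ rk x * of_int (\<Sum>z\<in>{z\<in>P. le x z \<and> le z w}. mobius P le x z)"
    by (simp add: sum_distrib_left)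
  also have "\<dots> = (if x = w then (-1) ^ rk x else 0)"
    using mob_sum[OF assms] by simp
  finally show ?thesis .
qed

end




context eul
begin

definition Gop :: "('a \<Rightarrow> qfield) \<Rightarrow> ('a \<Rightarrow> qfield) \<Rightarrow> 'a \<Rightarrow> qfield" where
  "Gop c v x = (\<Sum>z\<in>{z\<in>P. le x z}. c z * v z)"

lemma Gop_cong: "(\<And>z. z \<in> P \<Longrightarrow> u z = v z) \<Longrightarrow> Gop c u x = Gop c v x"
  unfolding Gop_def by (rule sum.cong) auto

lemma Gop_lin: "Gop c (\<lambda>y. \<Sum>d\<in>D. f d * V d y) x = (\<Sum>d\<in>D. f d * Gop c (V d) x)"
  unfolding Gop_def by (simp add: sum_distrib_left sum.swap[of _ D] algebra_simps)

lemma Gop_diff: "Gop c (\<lambda>y. u y - v y) x = Gop c u x - Gop c v x"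
  unfolding Gop_def by (simp add: algebra_simps sum_subtractf)

lemma Gop_zero: "Gop c (\<lambda>y. 0) x = 0"
  unfolding Gop_def by simp

definition Aop where "Aop = Gop (\<lambda>z. qq ^ rk z)"
definition A'op where "A'op = Gop (\<lambda>z. inverse qq ^ rk z)"
definition Bop where "Bop v x = (-1) ^ rk x / qq ^ rk x * Gop (\<lambda>z. (-1) ^ rk z) v x"

definition ev1 :: "'a \<Rightarrow> 'a \<Rightarrow> qfield" where "ev1 y = (\<lambda>x. if x = y then 1 else 0)"

lemma Aop_ev1: "x \<in> P \<Longrightarrow> y \<in> P \<Longrightarrow> Aop (ev1 y) x = (if le x y then qq ^ rk y else 0)"
  unfolding Aop_def Gop_def ev1_def
  by (simp add: if_distrib[of "\<lambda>t. _ * t"] sum.delta[OF finite_subset[OF _ fin]] cong: if_cong)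

lemma BA: assumes "x \<in> P" shows "Bop (Aop v) x = v x"
proof -
  have "Gop (\<lambda>z. (-1) ^ rk z) (Aop v) x =
      (\<Sum>z\<in>{z\<in>P. le x z}. (-1) ^ rk z * (\<Sum>w\<in>{w\<in>P. le z w}. qq ^ rk w * v w))"
    by (simp add: Gop_def Aop_def)
  also have "\<dots> = (\<Sum>z\<in>{z\<in>P. le x z}. \<Sum>w\<in>{w\<in>P. le x w}. (if le z w then (-1) ^ rk z * (qq ^ rk w * v w) else 0))"
  proof (rule sum.cong[OF refl])
    fix z assume z: "z \<in> {z\<in>P. le x z}"
    have "{w\<in>P. le z w} = {w\<in>P. le x w} \<inter> {w. le z w}" using z assms ptrans by auto
    then show "(-1) ^ rk z * (\<Sum>w\<in>{w\<in>P. le z w}. qq ^ rk w * v w) =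
      (\<Sum>w\<in>{w\<in>P. le x w}. (if le z w then (-1) ^ rk z * (qq ^ rk w * v w) else 0))"
      by (simp add: sum_distrib_left sum.If_cases[OF finite_subset[OF _ fin]] Int_def)
  qed
  also have "\<dots> = (\<Sum>w\<in>{w\<in>P. le x w}. \<Sum>z\<in>{z\<in>P. le x z}. (if le z w then (-1) ^ rk z * (qq ^ rk w * v w) else 0))"
    by (rule sum.swap)
  also have "\<dots> = (\<Sum>w\<in>{w\<in>P. le x w}. qq ^ rk w * v w * (\<Sum>z\<in>{z\<in>P. le x z \<and> le z w}. (-1) ^ rk z))"
  proof (rule sum.cong[OF refl])
    fix w assume w: "w \<in> {w\<in>P. le x w}"
    have "(\<Sum>z\<in>{z\<in>P. le x z}. (if le z w then (-1) ^ rk z * (qq ^ rk w * v w) else 0)) =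
          (\<Sum>z\<in>{z\<in>P. le x z} \<inter> {z. le z w}. (-1) ^ rk z * (qq ^ rk w * v w))"
      by (simp add: sum.If_cases[OF finite_subset[OF _ fin]])
    also have "{z\<in>P. le x z} \<inter> {z. le z w} = {z\<in>P. le x z \<and> le z w}" by auto
    finally show "(\<Sum>z\<in>{z\<in>P. le x z}. (if le z w then (-1) ^ rk z * (qq ^ rk w * v w) else 0)) =
        qq ^ rk w * v w * (\<Sum>z\<in>{z\<in>P. le x z \<and> le z w}. (-1) ^ rk z)"
      by (simp add: sum_distrib_left mult_ac)
  qed
  also have "\<dots> = (\<Sum>w\<in>{w\<in>P. le x w}. (if w = x then qq ^ rk x * v x * (-1) ^ rk x else 0))"
    by (rule sum.cong[OF refl]) (use assms eul_sum in auto)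
  also have "\<dots> = qq ^ rk x * v x * (-1) ^ rk x"
    using assms prefl by (simp add: sum.delta[OF finite_subset[OF _ fin]])
  finally show ?thesis
    by (simp add: Bop_def field_simps power_mult_distrib[symmetric])
qed

end




lemma iter_gen:
  fixes T :: "('a \<Rightarrow> qfield) \<Rightarrow> 'a \<Rightarrow> qfield"
  assumes cong: "\<And>u v x. (\<And>z. z \<in> P \<Longrightarrow> u z = v z) \<Longrightarrow> T u x = T v x"
    and lin: "\<And>f x. T (\<lambda>y. \<Sum>d\<in>D. f d * V d y) x = (\<Sum>d\<in>D. f d * T (V d) x)"
    and eigv: "\<And>d x. x \<in> P \<Longrightarrow> T (V d) x = lam d * V d x"
    and e: "\<And>x. x \<in> P \<Longrightarrow> e x = (\<Sum>d\<in>D. V d x)"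
  shows "x \<in> P \<Longrightarrow> (T ^^ m) e x = (\<Sum>d\<in>D. lam d ^ m * V d x)"
proof (induction m arbitrary: x)
  case 0 then show ?case using e by simp
next
  case (Suc m)
  have "(T ^^ Suc m) e x = T ((T ^^ m) e) x" by simp
  also have "\<dots> = T (\<lambda>y. \<Sum>d\<in>D. lam d ^ m * V d y) x" by (rule cong) (use Suc.IH in auto)
  also have "\<dots> = (\<Sum>d\<in>D. lam d ^ m * T (V d) x)" by (rule lin)
  also have "\<dots> = (\<Sum>d\<in>D. lam d ^ Suc m * V d x)"
    by (rule sum.cong[OF refl]) (simp add: eigv[OF Suc.prems])
  finally show ?case .
qed

context eul
begin

lemma Aop_cong: "(\<And>z. z \<in> P \<Longrightarrow> u z = v z) \<Longrightarrow> Aop u x = Aop v x"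
  unfolding Aop_def by (rule Gop_cong)
lemma Aop_lin: "Aop (\<lambda>y. \<Sum>d\<in>D. f d * V d y) x = (\<Sum>d\<in>D. f d * Aop (V d) x)"
  unfolding Aop_def by (rule Gop_lin)
lemma Aop_diff: "Aop (\<lambda>y. u y - v y) x = Aop u x - Aop v x"
  unfolding Aop_def by (rule Gop_diff)
lemma Gop_scale: "Gop c (\<lambda>y. a * v y) x = a * Gop c v x"
  unfolding Gop_def by (simp add: sum_distrib_left mult_ac)
lemma Aop_scale: "Aop (\<lambda>y. a * v y) x = a * Aop v x"
  unfolding Aop_def by (rule Gop_scale)
lemma Bop_cong: "(\<And>z. z \<in> P \<Longrightarrow> u z = v z) \<Longrightarrow> Bop u x = Bop v x"
  unfolding Bop_def using Gop_cong by metis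
lemma Bop_lin: "Bop (\<lambda>y. \<Sum>d\<in>D. f d * V d y) x = (\<Sum>d\<in>D. f d * Bop (V d) x)"
  unfolding Bop_def Gop_lin by (simp add: sum_distrib_left mult_ac)
lemma Bop_scale: "Bop (\<lambda>y. a * v y) x = a * Bop v x"
  unfolding Bop_def Gop_scale by (simp add: mult_ac)

definition eig :: "nat \<Rightarrow> ('a \<Rightarrow> qfield) \<Rightarrow> bool" where
  "eig d v \<longleftrightarrow> (\<forall>x\<in>P. Aop v x = qq ^ d * v x)"

lemma eig_B: assumes "eig d v" "x \<in> P" shows "Bop v x = inverse (qq ^ d) * v x"
proof -
  have "v x = Bop (Aop v) x" using BA assms by simp
  also have "\<dots> = Bop (\<lambda>z. qq ^ d * v z) x" by (rule Bop_cong) (use assms in \<open>simp add: eig_def\<close>)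
  also have "\<dots> = qq ^ d * Bop v x" by (rule Bop_scale)
  finally show ?thesis by (simp add: field_simps)
qed

lemma decomp_aux: "\<forall>y. rk y = R \<longrightarrow> y \<in> P \<longrightarrow> (\<exists>V. (\<forall>d. eig d (V d)) \<and> (\<forall>d x. R < d \<longrightarrow> V d x = 0)
    \<and> (\<forall>x\<in>P. ev1 y x = (\<Sum>d\<le>R. V d x)))"
proof (induction R rule: less_induct)
  case (less R)
  show ?case
  proof (intro allI impI)
    fix y assume y: "rk y = R" "y \<in> P"
    define L where "L = {x'\<in>P. le x' y \<and> x' \<noteq> y}"
    have finL: "finite L" using fin by (simp add: L_def)
    have "\<forall>x'\<in>L. \<exists>V. (\<forall>d. eig d (V d)) \<and> (\<forall>d x. rk x' < d \<longrightarrow> V d x = 0)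
       \<and> (\<forall>x\<in>P. ev1 x' x = (\<Sum>d\<le>rk x'. V d x))"
    proof
      fix x' assume x': "x' \<in> L"
      then have "rk x' < R" using rk_less y by (auto simp: L_def)
      then show "\<exists>V. (\<forall>d. eig d (V d)) \<and> (\<forall>d x. rk x' < d \<longrightarrow> V d x = 0)
       \<and> (\<forall>x\<in>P. ev1 x' x = (\<Sum>d\<le>rk x'. V d x))" using less x' by (auto simp: L_def)
    qed
    then obtain VV where VV: "\<And>x'. x' \<in> L \<Longrightarrow> (\<forall>d. eig d (VV x' d)) \<and> (\<forall>d x. rk x' < d \<longrightarrow> VV x' d x = 0)
       \<and> (\<forall>x\<in>P. ev1 x' x = (\<Sum>d\<le>rk x'. VV x' d x))" by metis
    have VVR: "ev1 x' x = (\<Sum>d<R. VV x' d x)" if "x' \<in> L" "x \<in> P" for x' x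
    proof -
      have "rk x' < R" using that rk_less y by (auto simp: L_def)
      have "ev1 x' x = (\<Sum>d\<le>rk x'. VV x' d x)" using VV that by blast
      also have "\<dots> = (\<Sum>d<R. VV x' d x)"
        by (rule sum.mono_neutral_left) (use \<open>rk x' < R\<close> VV[OF that(1)] in auto)
      finally show ?thesis .
    qed
    define U where "U d x = (\<Sum>x'\<in>L. qq ^ R * VV x' d x)" for d x
    have eigU: "eig d (U d)" for d
      unfolding eig_def
    proof
      fix x assume x: "x \<in> P"
      have "Aop (U d) x = (\<Sum>x'\<in>L. qq ^ R * Aop (VV x' d) x)"
        unfolding U_def[abs_def] by (rule Aop_lin)
      also have "\<dots> = (\<Sum>x'\<in>L. qq ^ R * (qq ^ d * VV x' d x))"
        by (rule sum.cong[OF refl]) (use VV x in \<open>auto simp: eig_def\<close>)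
      also have "\<dots> = qq ^ d * U d x" by (simp add: U_def sum_distrib_left mult_ac)
      finally show "Aop (U d) x = qq ^ d * U d x" .
    qed
    have sumU: "(\<Sum>d<R. U d x) = (if x \<in> L then qq ^ R else 0)" if x: "x \<in> P" for x
    proof -
      have "(\<Sum>d<R. U d x) = (\<Sum>x'\<in>L. qq ^ R * (\<Sum>d<R. VV x' d x))"
        by (simp add: U_def sum.swap[of _ L] sum_distrib_left)
      also have "\<dots> = (\<Sum>x'\<in>L. qq ^ R * ev1 x' x)"
        by (rule sum.cong[OF refl]) (use VVR x in auto)
      also have "\<dots> = (if x \<in> L then qq ^ R else 0)"
        using finL by (simp add: ev1_def if_distrib[of "\<lambda>t. _ * t"] cong: if_cong)
      finally show ?thesis .
    qed
    have Aey: "Aop (ev1 y) x = qq ^ R * ev1 y x + (\<Sum>d<R. U d x)" if x: "x \<in> P" for x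
      using Aop_ev1[OF x y(2)] sumU[OF x] y x prefl[OF y(2)] by (auto simp: ev1_def L_def)
    define c where "c d = inverse (qq ^ d - qq ^ R)" for d
    have c: "c d * (qq ^ d - qq ^ R) = 1" if "d < R" for d
    proof -
      have "qq ^ d \<noteq> qq ^ R" using that qq_pow_inj by simp
      then show ?thesis by (simp add: c_def)
    qed
    define V where "V d = (\<lambda>x. if d < R then c d * U d x else if d = R then
        ev1 y x - (\<Sum>d'<R. c d' * U d' x) else 0)" for d
    have "eig d (V d)" for d
    proof (cases "d < R")
      case True
      then have "V d = (\<lambda>x. c d * U d x)" by (simp add: V_def)
      then show ?thesis using eigU[of d] unfolding eig_def by (simp add: Aop_scale)
    next
      case False
      show ?thesis
      proof (cases "d = R")
        case True
        then have Vd: "V d = (\<lambda>x. ev1 y x - (\<Sum>d'<R. c d' * U d' x))" by (simp add: V_def)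
        show ?thesis unfolding eig_def Vd
        proof
          fix x assume x: "x \<in> P"
          have "Aop (\<lambda>x. ev1 y x - (\<Sum>d'<R. c d' * U d' x)) x
              = Aop (ev1 y) x - (\<Sum>d'<R. c d' * Aop (U d') x)"
            by (simp add: Aop_diff Aop_lin)
          also have "\<dots> = qq ^ R * ev1 y x + (\<Sum>d<R. U d x) - (\<Sum>d'<R. c d' * (qq ^ d' * U d' x))"
            using eigU x by (simp add: Aey eig_def)
          also have "(\<Sum>d'<R. c d' * (qq ^ d' * U d' x)) = (\<Sum>d'<R. U d' x + qq ^ R * (c d' * U d' x))"
          proof (rule sum.cong[OF refl])
            fix d' assume "d' \<in> {..<R}"
            then have "c d' * (qq ^ d' - qq ^ R) = 1" using c by simp
            then have "c d' * qq ^ d' = 1 + qq ^ R * c d'" by (simp add: algebra_simps)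
            then show "c d' * (qq ^ d' * U d' x) = U d' x + qq ^ R * (c d' * U d' x)"
              by (metis (no_types, lifting) distrib_right mult.assoc mult_1)
          qed
          finally show "Aop (\<lambda>x. ev1 y x - (\<Sum>d'<R. c d' * U d' x)) x =
              qq ^ d * (ev1 y x - (\<Sum>d'<R. c d' * U d' x))"
            using True by (simp add: sum.distrib sum_distrib_left algebra_simps)
        qed
      next
        case False
        then have "V d = (\<lambda>x. 0)" using \<open>\<not> d < R\<close> by (simp add: V_def)
        then show ?thesis by (simp add: eig_def Aop_def Gop_zero)
      qed
    qed
    moreover have "\<forall>d x. R < d \<longrightarrow> V d x = 0" by (simp add: V_def)
    moreover have "\<forall>x\<in>P. ev1 y x = (\<Sum>d\<le>R. V d x)"
    proof
      fix x assume "x \<in> P"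
      have "(\<Sum>d\<le>R. V d x) = (\<Sum>d<R. V d x) + V R x"
        by (simp add: lessThan_Suc_atMost[symmetric])
      also have "(\<Sum>d<R. V d x) = (\<Sum>d<R. c d * U d x)"
        by (rule sum.cong[OF refl]) (simp add: V_def)
      finally show "ev1 y x = (\<Sum>d\<le>R. V d x)" by (simp add: V_def)
    qed
    ultimately show "\<exists>V. (\<forall>d. eig d (V d)) \<and> (\<forall>d x. R < d \<longrightarrow> V d x = 0)
      \<and> (\<forall>x\<in>P. ev1 y x = (\<Sum>d\<le>R. V d x))" by blast
  qed
qed

lemma decomp: obtains V where "\<And>d. eig d (V d)" "\<And>x. x \<in> P \<Longrightarrow> ev1 ohat x = (\<Sum>d\<le>rk ohat. V d x)"
proof -
  from decomp_aux[of "rk ohat", rule_format, OF refl ohat]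
  obtain V where "\<forall>d. eig d (V d)" "\<forall>x\<in>P. ev1 ohat x = (\<Sum>d\<le>rk ohat. V d x)" by blast
  then show ?thesis using that by blast
qed

lemma A'op_app: "A'op v x = (\<Sum>z\<in>{z\<in>P. le x z}. inverse qq ^ rk z * v z)"
  by (simp add: A'op_def Gop_def)

lemma Bop_A'op: "x \<in> P \<Longrightarrow> (Bop ^^ m) u x =
   (-1) ^ rk x / qq ^ rk x * (A'op ^^ m) (\<lambda>z. (-1) ^ rk z * qq ^ rk z * u z) x"
proof (induction m arbitrary: x)
  case 0
  have "((-1::qfield) ^ rk x) * (-1) ^ rk x = 1" by (simp add: power_mult_distrib[symmetric])
  then show ?case by (simp add: field_simps)
next
  case (Suc m)
  let ?T = "\<lambda>z. (-1) ^ rk z * qq ^ rk z * u z"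
  have "(Bop ^^ Suc m) u x = Bop ((Bop ^^ m) u) x" by simp
  also have "\<dots> = (-1) ^ rk x / qq ^ rk x * (\<Sum>z\<in>{z\<in>P. le x z}. (-1) ^ rk z * (Bop ^^ m) u z)"
    unfolding Bop_def[of "(Bop ^^ m) u" x] Gop_def by simp
  also have "(\<Sum>z\<in>{z\<in>P. le x z}. (-1) ^ rk z * (Bop ^^ m) u z)
      = (\<Sum>z\<in>{z\<in>P. le x z}. inverse qq ^ rk z * (A'op ^^ m) ?T z)"
  proof (rule sum.cong[OF refl])
    fix z assume "z \<in> {z\<in>P. le x z}"
    then have "(Bop ^^ m) u z = (-1) ^ rk z / qq ^ rk z * (A'op ^^ m) ?T z" using Suc.IH by simp
    moreover have "((-1::qfield) ^ rk z) * (-1) ^ rk z = 1" by (simp add: power_mult_distrib[symmetric])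
    ultimately have "(-1) ^ rk z * (Bop ^^ m) u z = ((-1) ^ rk z * (-1) ^ rk z) / qq ^ rk z * (A'op ^^ m) ?T z"
      by simp
    then show "(-1) ^ rk z * (Bop ^^ m) u z = inverse qq ^ rk z * (A'op ^^ m) ?T z"
      using \<open>((-1::qfield) ^ rk z) * (-1) ^ rk z = 1\<close> by (simp add: power_inverse divide_inverse)
  qed
  also have "\<dots> = (A'op ^^ Suc m) ?T x"
    using A'op_app[of "(A'op ^^ m) ?T" x] by simp
  finally show ?case .
qed

lemma sg_A'op: "qinv_subst ((A'op ^^ m) u x) = (Aop ^^ m) (\<lambda>z. qinv_subst (u z)) x"
proof (induction m arbitrary: x)
  case (Suc m)
  then show ?case
    by (simp add: A'op_def Aop_def Gop_def sg_sum sg_mult sg_power sg_inv_qq)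
qed simp

end




context eul
begin

definition st :: "'a set \<Rightarrow> nat \<Rightarrow> 'a list set" where
  "st T k = {c. length c = k \<and> set c \<subseteq> T \<and> sorted_wrt (\<lambda>x y. le x y \<and> x \<noteq> y) c}"

definition wt :: "'a list \<Rightarrow> qfield" where "wt c = qq ^ sum_list (map rk c)"

definition RHS :: "'a set \<Rightarrow> nat \<Rightarrow> qfield" where
  "RHS T N = (\<Sum>k\<le>N. \<Sum>c\<in>st T k. wt c * hs (map rk c) (N - k))"

lemma wt_Cons: "wt (x # c) = qq ^ rk x * wt c"
  by (simp add: wt_def power_add)

lemma finite_st: "finite T \<Longrightarrow> finite (st T k)"
proof -
  assume "finite T"
  have "st T k \<subseteq> {c. set c \<subseteq> T \<and> length c = k}" by (auto simp: st_def)
  moreover have "finite {c. set c \<subseteq> T \<and> length c = k}"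
    using \<open>finite T\<close> by (rule finite_lists_length_eq)
  ultimately show ?thesis by (rule finite_subset)
qed

lemma st_0: "st T 0 = {[]}" by (auto simp: st_def)

lemma st_Suc: "st T (Suc k) = (\<lambda>(x, c). x # c) ` (SIGMA x:T. st {y\<in>T. le x y \<and> x \<noteq> y} k)"
proof (rule set_eqI, rule iffI)
  fix c assume "c \<in> st T (Suc k)"
  then obtain x c' where "c = x # c'" "x \<in> T" "c' \<in> st {y\<in>T. le x y \<and> x \<noteq> y} k"
    by (cases c) (auto simp: st_def)
  then show "c \<in> (\<lambda>(x, c). x # c) ` (SIGMA x:T. st {y\<in>T. le x y \<and> x \<noteq> y} k)" by force
qed (auto simp: st_def)

lemma st_Suc_sum: assumes "finite T"
  shows "(\<Sum>c\<in>st T (Suc k). f c) = (\<Sum>x\<in>T. \<Sum>c\<in>st {y\<in>T. le x y \<and> x \<noteq> y} k. f (x # c))"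
proof -
  have inj: "inj_on (\<lambda>(x, c). x # c) (SIGMA x:T. st {y\<in>T. le x y \<and> x \<noteq> y} k)"
    by (auto intro!: inj_onI)
  have "(\<Sum>c\<in>st T (Suc k). f c) = (\<Sum>p\<in>(SIGMA x:T. st {y\<in>T. le x y \<and> x \<noteq> y} k). (\<lambda>(x, c). f (x # c)) p)"
    unfolding st_Suc by (rule sum.reindex_cong[OF inj refl]) auto
  also have "\<dots> = (\<Sum>x\<in>T. \<Sum>c\<in>st {y\<in>T. le x y \<and> x \<noteq> y} k. f (x # c))"
    using assms by (subst sum.Sigma) (auto simp: finite_st)
  finally show ?thesis .
qed

lemma st_mono: "T \<subseteq> T' \<Longrightarrow> st T k \<subseteq> st T' k"
  by (auto simp: st_def)

lemma st_split:
  assumes TP: "T \<subseteq> P" and x: "x \<in> T" and xmin: "\<And>y. y \<in> T \<Longrightarrow> le x y"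
  shows "st T (Suc k) = st {y\<in>T. le x y \<and> x \<noteq> y} (Suc k) \<union> Cons x ` st {y\<in>T. le x y \<and> x \<noteq> y} k"
proof (rule set_eqI, rule iffI)
  fix c assume c: "c \<in> st T (Suc k)"
  then obtain y c' where yc: "c = y # c'" "y \<in> T" "c' \<in> st {z\<in>T. le y z \<and> y \<noteq> z} k"
    unfolding st_Suc by auto
  show "c \<in> st {y\<in>T. le x y \<and> x \<noteq> y} (Suc k) \<union> Cons x ` st {y\<in>T. le x y \<and> x \<noteq> y} k"
  proof (cases "y = x")
    case True
    then show ?thesis using yc by auto
  next
    case False
    have "{z\<in>T. le y z \<and> y \<noteq> z} \<subseteq> {y\<in>T. le x y \<and> x \<noteq> y}"
    proof
      fix z assume z: "z \<in> {z\<in>T. le y z \<and> y \<noteq> z}"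
      have "z \<noteq> x"
      proof
        assume "z = x"
        then have "le y x" using z by simp
        moreover have "le x y" using xmin yc by simp
        ultimately show False using pantisym[of x y] TP x yc False by auto
      qed
      then show "z \<in> {y\<in>T. le x y \<and> x \<noteq> y}" using z xmin by auto
    qed
    then have "c' \<in> st {z\<in>{y\<in>T. le x y \<and> x \<noteq> y}. le y z \<and> y \<noteq> z} k"
      using yc(3) by (auto simp: st_def)
    moreover have "y \<in> {y\<in>T. le x y \<and> x \<noteq> y}" using False xmin yc by auto
    ultimately have "c \<in> st {y\<in>T. le x y \<and> x \<noteq> y} (Suc k)" unfolding st_Suc yc(1) by blast
    then show ?thesis by blast
  qed
next
  fix c assume "c \<in> st {y\<in>T. le x y \<and> x \<noteq> y} (Suc k) \<union> Cons x ` st {y\<in>T. le x y \<and> x \<noteq> y} k"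
  then show "c \<in> st T (Suc k)"
  proof
    assume "c \<in> st {y\<in>T. le x y \<and> x \<noteq> y} (Suc k)"
    then show ?thesis using st_mono[of "{y\<in>T. le x y \<and> x \<noteq> y}" T] by auto
  next
    assume "c \<in> Cons x ` st {y\<in>T. le x y \<and> x \<noteq> y} k"
    then show ?thesis using x by (auto simp: st_def)
  qed
qed

lemma RHS_split:
  assumes TP: "T \<subseteq> P" and x: "x \<in> T" and xmin: "\<And>y. y \<in> T \<Longrightarrow> le x y"
  shows "(\<Sum>k\<le>N. \<Sum>c\<in>st T k. F k c) = (\<Sum>k\<le>N. \<Sum>c\<in>st {y\<in>T. le x y \<and> x \<noteq> y} k. F k c)
     + (\<Sum>k<N. \<Sum>c\<in>st {y\<in>T. le x y \<and> x \<noteq> y} k. F (Suc k) (x # c))"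
proof -
  let ?T = "{y\<in>T. le x y \<and> x \<noteq> y}"
  have finT: "finite T" using TP fin finite_subset by blast
  have fin2: "finite ?T" using finT by simp
  have G: "(\<Sum>c\<in>st T (Suc k). F (Suc k) c) = (\<Sum>c\<in>st ?T (Suc k). F (Suc k) c) + (\<Sum>c\<in>st ?T k. F (Suc k) (x # c))" for k
  proof -
    have disj: "st ?T (Suc k) \<inter> Cons x ` st ?T k = {}" by (auto simp: st_def)
    have "(\<Sum>c\<in>st T (Suc k). F (Suc k) c) = (\<Sum>c\<in>st ?T (Suc k). F (Suc k) c) + (\<Sum>c\<in>Cons x ` st ?T k. F (Suc k) c)"
    proof -
      have e: "st T (Suc k) = st ?T (Suc k) \<union> Cons x ` st ?T k" by (rule st_split[OF assms])
      show ?thesis unfolding e by (rule sum.union_disjoint) (use fin2 disj in \<open>auto simp: finite_st\<close>)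
    qed
    also have "(\<Sum>c\<in>Cons x ` st ?T k. F (Suc k) c) = (\<Sum>c\<in>st ?T k. F (Suc k) (x # c))"
      by (rule sum.reindex_cong[of "Cons x"]) (auto intro: inj_onI)
    finally show ?thesis .
  qed
  have "(\<Sum>k\<le>N. \<Sum>c\<in>st T k. F k c) = (\<Sum>c\<in>st T 0. F 0 c) + (\<Sum>k<N. \<Sum>c\<in>st T (Suc k). F (Suc k) c)"
    by (rule sum.atMost_shift)
  also have "\<dots> = (\<Sum>c\<in>st ?T 0. F 0 c) + (\<Sum>k<N. \<Sum>c\<in>st ?T (Suc k). F (Suc k) c)
      + (\<Sum>k<N. \<Sum>c\<in>st ?T k. F (Suc k) (x # c))"
    by (simp add: G st_0 sum.distrib add.assoc)
  also have "(\<Sum>c\<in>st ?T 0. F 0 c) + (\<Sum>k<N. \<Sum>c\<in>st ?T (Suc k). F (Suc k) c) = (\<Sum>k\<le>N. \<Sum>c\<in>st ?T k. F k c)"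
    by (rule sum.atMost_shift[symmetric])
  finally show ?thesis .
qed

lemma sum_if_less: "(\<Sum>k\<le>N. if k < N then g k else 0) = (\<Sum>k<N. g k)" for g :: "nat \<Rightarrow> qfield"
proof -
  have e: "{..N} = insert N {..<N}" by auto
  have "(\<Sum>k\<in>{..<N}. if k < N then g k else 0) = (\<Sum>k<N. g k)"
    by (rule sum.cong) auto
  then show ?thesis unfolding e by simp
qed

lemma hs_step: "k \<le> N \<Longrightarrow> hs (r # a) (N - k) = hs a (N - k) + (if k < N then qq ^ r * hs (r # a) (N - Suc k) else 0)"
proof -
  assume "k \<le> N"
  show ?thesis
  proof (cases "k < N")
    case True
    then have "N - k = Suc (N - Suc k)" by simp
    then show ?thesis using True hs_rec by simp
  next
    case False
    then have "N - k = 0" using \<open>k \<le> N\<close> by simp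
    then show ?thesis using False by (simp add: hs_0)
  qed
qed

lemma core:
  assumes SP: "S \<subseteq> P"
  shows "RHS S (Suc N) = (\<Sum>x\<in>S. qq ^ rk x * RHS {y\<in>S. le x y} N)"
proof -
  have finS: "finite S" using SP fin finite_subset by blast
  have "RHS S (Suc N) = (\<Sum>c\<in>st S 0. wt c * hs (map rk c) (Suc N - 0))
      + (\<Sum>k<Suc N. \<Sum>c\<in>st S (Suc k). wt c * hs (map rk c) (Suc N - Suc k))"
    unfolding RHS_def by (rule sum.atMost_shift)
  also have "(\<Sum>c\<in>st S 0. wt c * hs (map rk c) (Suc N - 0)) = 0"
    by (simp add: st_0 hs_Nil_Suc)
  also have "(\<Sum>k<Suc N. \<Sum>c\<in>st S (Suc k). wt c * hs (map rk c) (Suc N - Suc k))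
      = (\<Sum>k\<le>N. \<Sum>x\<in>S. \<Sum>c\<in>st {y\<in>S. le x y \<and> x \<noteq> y} k. qq ^ rk x * (wt c * hs (rk x # map rk c) (N - k)))"
    by (simp add: lessThan_Suc_atMost st_Suc_sum[OF finS] wt_Cons mult_ac)
  also have "\<dots> = (\<Sum>x\<in>S. \<Sum>k\<le>N. \<Sum>c\<in>st {y\<in>S. le x y \<and> x \<noteq> y} k. qq ^ rk x * (wt c * hs (rk x # map rk c) (N - k)))"
    by (rule sum.swap)
  also have "\<dots> = (\<Sum>x\<in>S. qq ^ rk x * RHS {y\<in>S. le x y} N)"
  proof (rule sum.cong[OF refl])
    fix x assume x: "x \<in> S"
    let ?T = "{y\<in>S. le x y}"
    let ?T' = "{y\<in>S. le x y \<and> x \<noteq> y}"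
    have T': "{y\<in>?T. le x y \<and> x \<noteq> y} = ?T'" by auto
    have xT: "x \<in> ?T" using x SP prefl by auto
    have "RHS ?T N = (\<Sum>k\<le>N. \<Sum>c\<in>st ?T' k. wt c * hs (map rk c) (N - k))
       + (\<Sum>k<N. \<Sum>c\<in>st ?T' k. wt (x # c) * hs (map rk (x # c)) (N - Suc k))"
    proof -
      have sp: "RHS ?T N = (\<Sum>k\<le>N. \<Sum>c\<in>st {y\<in>?T. le x y \<and> x \<noteq> y} k. wt c * hs (map rk c) (N - k))
       + (\<Sum>k<N. \<Sum>c\<in>st {y\<in>?T. le x y \<and> x \<noteq> y} k. wt (x # c) * hs (map rk (x # c)) (N - Suc k))"
        unfolding RHS_def by (rule RHS_split) (use SP xT in auto)
      from sp[unfolded T'] show ?thesis .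
    qed
    also have "\<dots> = (\<Sum>k\<le>N. \<Sum>c\<in>st ?T' k. wt c * hs (map rk c) (N - k))
       + (\<Sum>k\<le>N. if k < N then (\<Sum>c\<in>st ?T' k. qq ^ rk x * (wt c * hs (rk x # map rk c) (N - Suc k))) else 0)"
    proof -
      have "(\<Sum>k\<le>N. if k < N then (\<Sum>c\<in>st ?T' k. qq ^ rk x * (wt c * hs (rk x # map rk c) (N - Suc k))) else 0)
         = (\<Sum>k<N. \<Sum>c\<in>st ?T' k. qq ^ rk x * (wt c * hs (rk x # map rk c) (N - Suc k)))"
        by (rule sum_if_less)
      then show ?thesis by (simp add: wt_Cons mult_ac)
    qed
    also have "\<dots> = (\<Sum>k\<le>N. \<Sum>c\<in>st ?T' k. wt c * hs (rk x # map rk c) (N - k))"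
      unfolding sum.distrib[symmetric]
    proof (rule sum.cong[OF refl])
      fix k assume "k \<in> {..N}"
      then have k: "k \<le> N" by simp
      show "(\<Sum>c\<in>st ?T' k. wt c * hs (map rk c) (N - k)) +
          (if k < N then \<Sum>c\<in>st ?T' k. qq ^ rk x * (wt c * hs (rk x # map rk c) (N - Suc k)) else 0) =
          (\<Sum>c\<in>st ?T' k. wt c * hs (rk x # map rk c) (N - k))"
        by (simp add: hs_step[OF k] distrib_left sum.distrib sum_distrib_left mult_ac)
    qed
    finally show "(\<Sum>k\<le>N. \<Sum>c\<in>st ?T' k. qq ^ rk x * (wt c * hs (rk x # map rk c) (N - k))) = qq ^ rk x * RHS ?T N"
      by (simp add: sum_distrib_left)
  qed
  finally show ?thesis by simp
qed

lemma Aop_app: "Aop v x = (\<Sum>z\<in>{z\<in>P. le x z}. qq ^ rk z * v z)"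
  by (simp add: Aop_def Gop_def)

lemma Aop_RHS: "x \<in> P \<Longrightarrow> (Aop ^^ N) (\<lambda>_. 1) x = RHS {z\<in>P. le x z} N"
proof (induction N arbitrary: x)
  case 0
  then show ?case by (simp add: RHS_def st_0 wt_def hs_0)
next
  case (Suc N)
  have "(Aop ^^ Suc N) (\<lambda>_. 1) x = (\<Sum>z\<in>{z\<in>P. le x z}. qq ^ rk z * (Aop ^^ N) (\<lambda>_. 1) z)"
    using Aop_app[of "(Aop ^^ N) (\<lambda>_. 1)" x] by simp
  also have "\<dots> = (\<Sum>z\<in>{z\<in>P. le x z}. qq ^ rk z * RHS {y\<in>{z\<in>P. le x z}. le z y} N)"
  proof (rule sum.cong[OF refl])
    fix z assume z: "z \<in> {z\<in>P. le x z}"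
    have "{y\<in>{z\<in>P. le x z}. le z y} = {y\<in>P. le z y}"
      using z Suc.prems ptrans by auto
    then show "qq ^ rk z * (Aop ^^ N) (\<lambda>_. 1) z = qq ^ rk z * RHS {y\<in>{z\<in>P. le x z}. le z y} N"
      using Suc.IH z by simp
  qed
  also have "\<dots> = RHS {z\<in>P. le x z} (Suc N)"
    by (rule core[symmetric]) auto
  finally show ?case .
qed

end




context eul
begin

lemma Gop_iter_scale: "((Gop c) ^^ N) (\<lambda>z. a * u z) x = a * ((Gop c) ^^ N) u x"
proof (induction N arbitrary: x)
  case (Suc N)
  have e: "((Gop c) ^^ N) (\<lambda>z. a * u z) = (\<lambda>y. a * ((Gop c) ^^ N) u y)" using Suc.IH by (intro ext)
  show ?case by (simp add: e Gop_scale)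
qed simp

lemma Aop_iter_cong: "x \<in> P \<Longrightarrow> (\<And>z. z \<in> P \<Longrightarrow> u z = v z) \<Longrightarrow> (Aop ^^ N) u x = (Aop ^^ N) v x"
proof (induction N arbitrary: x)
  case 0 then show ?case by simp
next
  case (Suc N)
  have "Aop ((Aop ^^ N) u) x = Aop ((Aop ^^ N) v) x"
    by (rule Aop_cong) (rule Suc.IH, assumption, rule Suc.prems(2))
  then show ?case by simp
qed

lemma pchains_st: "pchains P le k = st P k"
  unfolding pchains_def st_def by (auto simp: sorted_wrt_iff_nth_less)

lemma st_props:
  assumes "c \<in> st P k"
  shows "distinct (map rk c)" "k \<le> card P"
proof -
  have c: "sorted_wrt (\<lambda>x y. le x y \<and> x \<noteq> y) c" "set c \<subseteq> P" "length c = k"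
    using assms by (auto simp: st_def)
  have "sorted_wrt (\<lambda>x y. rk x < rk y) c"
    by (rule sorted_wrt_mono_rel[OF _ c(1)]) (use c(2) rk_less in auto)
  then have "sorted_wrt (<) (map rk c)" by (simp add: sorted_wrt_map)
  then show d: "distinct (map rk c)" by (simp add: strict_sorted_iff)
  then have "distinct c" by (simp add: distinct_map)
  then have "k = card (set c)" using c(3) by (simp add: distinct_card)
  also have "\<dots> \<le> card P" using c(2) fin by (rule card_mono[rotated])
  finally show "k \<le> card P" .
qed

lemma zeta_val:
  assumes m: "m \<ge> Suc (card P)"
  shows "poly (qZeta P le rk) (qint m) = inverse (qq ^ rk ohat) * (Aop ^^ m) (ev1 ohat) zhat"
proof -
  define N where "N = m - 1"
  have mN: "m = Suc N" and NP: "card P \<le> N" using m by (auto simp: N_def)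
  have cP: "card P \<ge> 1" using zhat fin by (metis One_nat_def Suc_leI card_gt_0_iff empty_iff)
  have "poly (qZeta P le rk) (qint m) = (\<Sum>k\<in>{1..card P}. \<Sum>c\<in>st P k. wt c * hs (map rk c) (N - k))"
    unfolding qZeta_def poly_sum pchains_st
  proof (rule sum.cong[OF refl], rule sum.cong[OF refl])
    fix k c assume k: "k \<in> {1..card P}" and c: "c \<in> st P k"
    have lc: "length c = k" using c by (simp add: st_def)
    have "(\<Sum>i<k. rk (c ! i)) = sum_list (map rk c)"
      using lc by (simp add: sum_list_sum_nth atLeast0LessThan)
    moreover have "poly [: - qint (k + 1) / qq ^ (k + 1), 1 / qq ^ (k + 1) :] (qint m) = qint (N - k)"
    proof -
      have "poly [: - qint (k + 1) / qq ^ (k + 1), 1 / qq ^ (k + 1) :] (qint m) = (qint m - qint (k + 1)) / qq ^ (k + 1)"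
        by (simp add: field_simps)
      also have "\<dots> = qint (m - (k + 1))" using k NP mN by (intro qint_shift) simp
      finally show ?thesis using mN by simp
    qed
    moreover have "poly (Epoly (map rk c)) (qint (N - k)) = hs (map rk c) (N - k)"
      using st_props(1)[OF c] k lc by (intro Epoly_prop) auto
    ultimately show "poly (smult (qq ^ (\<Sum>i<k. rk (c ! i))) (Epoly (map rk c) \<circ>\<^sub>p
        [:- qint (k + 1) / qq ^ (k + 1), 1 / qq ^ (k + 1):])) (qint m) = wt c * hs (map rk c) (N - k)"
      by (simp add: poly_pcompose wt_def)
  qed
  also have "\<dots> = RHS P N"
    unfolding RHS_def
  proof (rule sum.mono_neutral_left)
    show "{1..card P} \<subseteq> {..N}" using NP by auto
    show "\<forall>k\<in>{..N} - {1..card P}. (\<Sum>c\<in>st P k. wt c * hs (map rk c) (N - k)) = 0"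
    proof
      fix k assume k: "k \<in> {..N} - {1..card P}"
      show "(\<Sum>c\<in>st P k. wt c * hs (map rk c) (N - k)) = 0"
      proof (cases "k = 0")
        case True
        then have "N - k = Suc (N - 1)" using NP cP by simp
        then have "hs [] (N - k) = 0" by (metis hs_Nil_Suc)
        then show ?thesis using True by (simp add: st_0)
      next
        case False
        then have "k > card P" using k by auto
        then have "st P k = {}" using st_props(2) by fastforce
        then show ?thesis by simp
      qed
    qed
  qed simp
  also have "\<dots> = (Aop ^^ N) (\<lambda>_. 1) zhat"
  proof -
    have "{z\<in>P. le zhat z} = P" using zle by auto
    then show ?thesis using Aop_RHS[OF zhat, of N] by simp
  qed
  also have "\<dots> = inverse (qq ^ rk ohat) * (Aop ^^ m) (ev1 ohat) zhat"
  proof -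
    have "(Aop ^^ m) (ev1 ohat) zhat = (Aop ^^ N) (Aop (ev1 ohat)) zhat"
      unfolding mN funpow_Suc_right o_apply by (rule refl)
    also have "\<dots> = (Aop ^^ N) (\<lambda>z. qq ^ rk ohat * 1) zhat"
      by (rule Aop_iter_cong[OF zhat]) (simp add: Aop_ev1 ohat leo)
    also have "\<dots> = qq ^ rk ohat * (Aop ^^ N) (\<lambda>_. 1) zhat"
      unfolding Aop_def by (rule Gop_iter_scale)
    finally show ?thesis by simp
  qed
  finally show ?thesis .
qed

lemma main:
  "qZeta P le rk = smult (inverse ((- qq) ^ rk ohat))
      (pcompose (map_poly qinv_subst (qZeta P le rk)) [: 0, - qq :])"
proof -
  obtain V where eigV: "\<And>d. eig d (V d)" and eV: "\<And>x. x \<in> P \<Longrightarrow> ev1 ohat x = (\<Sum>d\<le>rk ohat. V d x)"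
    using decomp by blast
  define n where "n = rk ohat"
  define W where "W = (\<Sum>d\<le>n. monom (V d zhat) d)"
  define Z' where "Z' = smult (inverse (qq ^ n)) (pcompose W [:1, qq - 1:])"
  have polyW: "poly W u = (\<Sum>d\<le>n. V d zhat * u ^ d)" for u
    by (simp add: W_def poly_sum poly_monom)
  have Aiter: "(Aop ^^ m) (ev1 ohat) zhat = (\<Sum>d\<le>n. (qq ^ d) ^ m * V d zhat)" for m
  proof (rule iter_gen[where T=Aop and D="{..n}" and V=V and lam="\<lambda>d. qq ^ d" and e="ev1 ohat"])
    show "\<And>u v x. (\<And>z. z \<in> P \<Longrightarrow> u z = v z) \<Longrightarrow> Aop u x = Aop v x" by (rule Aop_cong)
    show "\<And>f x. Aop (\<lambda>y. \<Sum>d\<in>{..n}. f d * V d y) x = (\<Sum>d\<in>{..n}. f d * Aop (V d) x)" by (rule Aop_lin)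
    show "\<And>d x. x \<in> P \<Longrightarrow> Aop (V d) x = qq ^ d * V d x" using eigV unfolding eig_def by blast
    show "\<And>x. x \<in> P \<Longrightarrow> ev1 ohat x = (\<Sum>d\<in>{..n}. V d x)" using eV unfolding n_def by blast
    show "zhat \<in> P" by (rule zhat)
  qed
  have Biter: "(Bop ^^ m) (ev1 ohat) zhat = (\<Sum>d\<le>n. (inverse (qq ^ d)) ^ m * V d zhat)" for m
  proof (rule iter_gen[where T=Bop and D="{..n}" and V=V and lam="\<lambda>d. inverse (qq ^ d)" and e="ev1 ohat"])
    show "\<And>u v x. (\<And>z. z \<in> P \<Longrightarrow> u z = v z) \<Longrightarrow> Bop u x = Bop v x" by (rule Bop_cong)
    show "\<And>f x. Bop (\<lambda>y. \<Sum>d\<in>{..n}. f d * V d y) x = (\<Sum>d\<in>{..n}. f d * Bop (V d) x)" by (rule Bop_lin)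
    show "\<And>d x. x \<in> P \<Longrightarrow> Bop (V d) x = inverse (qq ^ d) * V d x" using eig_B[OF eigV] by blast
    show "\<And>x. x \<in> P \<Longrightarrow> ev1 ohat x = (\<Sum>d\<in>{..n}. V d x)" using eV unfolding n_def by blast
    show "zhat \<in> P" by (rule zhat)
  qed
  have Z'val: "poly Z' (qint m) = inverse (qq ^ n) * (Aop ^^ m) (ev1 ohat) zhat" for m
  proof -
    have "poly Z' (qint m) = inverse (qq ^ n) * poly W (qq ^ m)"
      using qint_U[of m] by (simp add: Z'_def poly_pcompose mult.commute)
    also have "poly W (qq ^ m) = (Aop ^^ m) (ev1 ohat) zhat"
      unfolding polyW Aiter by (rule sum.cong[OF refl]) (simp add: power_mult[symmetric] mult.commute)
    finally show ?thesis .
  qed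
  have ZZ: "qZeta P le rk = Z'"
    by (rule poly_eq_qint[of "Suc (card P)"]) (simp add: zeta_val Z'val n_def)
  define R where "R = smult (inverse ((- qq) ^ rk ohat)) (pcompose (map_poly qinv_subst (qZeta P le rk)) [: 0, - qq :])"
  have Rval: "poly R (qint m) = poly Z' (qint m)" for m
  proof -
    define t where "t = (inverse qq ^ m - 1) / (qq - 1)"
    have q1: "qq - 1 \<noteq> 0" by simp
    have q2: "inverse qq - 1 \<noteq> 0" using qq_ne1 by (metis inverse_1 inverse_inverse_eq right_minus_eq)
    have st: "qinv_subst t = - qq * qint m"
    proof -
      have "qinv_subst t = (qq ^ m - 1) / (inverse qq - 1)"
        by (simp add: t_def sg_divide sg_diff sg_power sg_inv_qq sg_qq)
      also have "\<dots> = - qq * qint m"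
        using q1 q2 by (simp add: qint_def field_simps)
      finally show ?thesis .
    qed
    have tU: "1 + (qq - 1) * t = inverse qq ^ m" using q1 by (simp add: t_def)
    have ev1s: "(\<lambda>z. (-1) ^ rk z * qq ^ rk z * ev1 ohat z) = (\<lambda>z. (-1) ^ n * qq ^ n * ev1 ohat z)"
      by (auto simp: ev1_def n_def)
    have ev1sg: "(\<lambda>z. qinv_subst (ev1 ohat z)) = ev1 ohat" by (auto simp: ev1_def)
    have "poly W (inverse qq ^ m) = (Bop ^^ m) (ev1 ohat) zhat"
      unfolding polyW Biter by (rule sum.cong[OF refl]) (simp add: power_mult[symmetric] mult.commute power_inverse)
    also have "\<dots> = (A'op ^^ m) (\<lambda>z. (-1) ^ n * qq ^ n * ev1 ohat z) zhat"
      using Bop_A'op[OF zhat, of m "ev1 ohat"] by (simp add: rk0 ev1s)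
    also have "\<dots> = (-1) ^ n * qq ^ n * (A'op ^^ m) (ev1 ohat) zhat"
      unfolding A'op_def by (rule Gop_iter_scale)
    finally have Wt: "poly W (inverse qq ^ m) = (-1) ^ n * qq ^ n * (A'op ^^ m) (ev1 ohat) zhat" .
    have "poly (qZeta P le rk) t = inverse (qq ^ n) * poly W (inverse qq ^ m)"
      unfolding ZZ Z'_def using tU by (simp add: poly_pcompose mult.commute)
    also have "\<dots> = (-1) ^ n * (A'op ^^ m) (ev1 ohat) zhat"
      unfolding Wt by simp
    finally have Zt: "poly (qZeta P le rk) t = (-1) ^ n * (A'op ^^ m) (ev1 ohat) zhat" .
    have "poly R (qint m) = inverse ((- qq) ^ n) * poly (map_poly qinv_subst (qZeta P le rk)) (qinv_subst t)"
      by (simp add: R_def poly_pcompose st n_def mult.commute)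
    also have "\<dots> = inverse ((- qq) ^ n) * qinv_subst (poly (qZeta P le rk) t)"
      by (simp add: poly_map_sg)
    also have "\<dots> = inverse ((- qq) ^ n) * ((-1) ^ n * (Aop ^^ m) (ev1 ohat) zhat)"
      unfolding Zt by (simp add: sg_mult sg_power sg_m1 sg_A'op ev1sg)
    also have "\<dots> = inverse (qq ^ n) * (Aop ^^ m) (ev1 ohat) zhat"
    proof -
      have "((-1::qfield) ^ n) * (-1) ^ n = 1" by (simp add: power_mult_distrib[symmetric])
      then show ?thesis by (simp add: power_minus[of qq] field_simps)
    qed
    finally show ?thesis using Z'val by simp
  qed
  have "R = Z'" by (rule poly_eq_qint[of 0]) (simp add: Rval)
  then show ?thesis using ZZ by (simp add: R_def)
qed

end



theorem mainTheorem2: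
  fixes P :: "'a set" and le :: "'a \<Rightarrow> 'a \<Rightarrow> bool" and zhat ohat :: 'a and rk :: "'a \<Rightarrow> nat"
  assumes "eulerian P le zhat ohat rk"
  shows "qZeta P le rk =
           smult (inverse ((- qq) ^ rk ohat))
             (pcompose (map_poly qinv_subst (qZeta P le rk)) [: 0, - qq :])"
  by (rule eul.main[OF eul.intro[OF assms]])

end
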